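(* Let $\eta\in[0,1]$ and let $\hat n_1,\hat n_2,\hat n_3\in\mathbb{R}^3$ be arbitrary unit vectors. For $k\in\{1,2,3\}$ let $M_k=\{E^k_+,E^k_-\}$ be the qubit POVM with $E^k_{\pm}=\tfrac12 I\pm\tfrac{\eta}{2}\vec\sigma\cdot\hat n_k$, and suppose the three POVMs are pairwise jointly measurable. Then there is no state-independent violation of the LSW inequality: there do not exist pairwise joint measurements $G_{12},G_{23},G_{13}$ (of $\{M_1,M_2\}$, $\{M_2,M_3\}$, $\{M_1,M_3\}$ respectively) such that $$R_3^Q(\rho)\equiv\frac13\sum_{(ij)\in\{(12),(23),(13)\}}\mathrm{Tr}\big(\rho\,(G^{ij}_{+-}+G^{ij}_{-+})\big)>1-\frac{\eta}{3}$$ holds for every qubit density operator $\rho$.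
   Context: $\vec\sigma=(\sigma_x,\sigma_y,\sigma_z)$ is the vector of Pauli matrices and $I$ the $2\times 2$ identity. A pairwise joint measurement of $\{M_i,M_j\}$ is a qubit POVM $G_{ij}=\{G^{ij}_{X_iX_j}\}_{X_i,X_j\in\{+,-\}}$ (so $G^{ij}_{X_iX_j}\ge 0$ and $\sum G^{ij}_{X_iX_j}=I$) satisfying $\sum_{X_j}G^{ij}_{X_iX_j}=E^i_{X_i}$ and $\sum_{X_i}G^{ij}_{X_iX_j}=E^j_{X_j}$. The POVMs are pairwise jointly measurable if such $G_{ij}$ exist for all three pairs. The quantity $R_3^Q(\rho)$ is the average probability of anticorrelated outcomes when one of the three pairs is chosen uniformly at random and jointly measured on $\rho$. *)

theory Defs
  imports "HOL-Analysis.Analysis"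
begin

type_synonym qop = "complex^2^2"

definition smat :: "complex \<Rightarrow> qop \<Rightarrow> qop" where
  "smat c A = (\<chi> i j. c * A$i$j)"

definition qtrace :: "qop \<Rightarrow> complex" where
  "qtrace A = (\<Sum>i\<in>UNIV. A$i$i)"

definition psd :: "qop \<Rightarrow> bool" where
  "psd A \<longleftrightarrow> (\<forall>v::complex^2.
      let q = (\<Sum>i\<in>UNIV. \<Sum>j\<in>UNIV. cnj (v$i) * A$i$j * v$j) in Im q = 0 \<and> Re q \<ge> 0)"

definition density :: "qop \<Rightarrow> bool" where
  "density \<rho> \<longleftrightarrow> psd \<rho> \<and> qtrace \<rho> = 1"

definition sigma_x :: qop where
  "sigma_x = (\<chi> i j. if i = j then 0 else 1)"
definition sigma_y :: qop where
  "sigma_y = (\<chi> i j. if i = j then 0 else if i = 1 then - \<i> else \<i>)"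
definition sigma_z :: qop where
  "sigma_z = (\<chi> i j. if i \<noteq> j then 0 else if i = 1 then 1 else -1)"

definition pauli_dot :: "real^3 \<Rightarrow> qop" where
  "pauli_dot n = smat (complex_of_real (n$1)) sigma_x + smat (complex_of_real (n$2)) sigma_y
                 + smat (complex_of_real (n$3)) sigma_z"

text \<open>Unsharp qubit effects E_{\<pm>} = I/2 \<pm> (\<eta>/2) \<sigma>\<cdot>n; outcome True = +, False = -.\<close>
definition effect :: "real \<Rightarrow> real^3 \<Rightarrow> bool \<Rightarrow> qop" where
  "effect \<eta> n x = smat (1/2) (mat 1) + smat (complex_of_real ((if x then 1 else -1) * \<eta> / 2)) (pauli_dot n)"

definition joint_meas :: "(bool \<Rightarrow> qop) \<Rightarrow> (bool \<Rightarrow> qop) \<Rightarrow> (bool \<Rightarrow> bool \<Rightarrow> qop) \<Rightarrow> bool" where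
  "joint_meas E F G \<longleftrightarrow>
     (\<forall>x y. psd (G x y)) \<and>
     (\<Sum>x\<in>UNIV. \<Sum>y\<in>UNIV. G x y) = mat 1 \<and>
     (\<forall>x. (\<Sum>y\<in>UNIV. G x y) = E x) \<and>
     (\<forall>y. (\<Sum>x\<in>UNIV. G x y) = F y)"

definition anticorr :: "qop \<Rightarrow> (bool \<Rightarrow> bool \<Rightarrow> qop) \<Rightarrow> real" where
  "anticorr \<rho> G = Re (qtrace (\<rho> ** (G True False + G False True)))"

definition R3Q :: "qop \<Rightarrow> (bool \<Rightarrow> bool \<Rightarrow> qop) \<Rightarrow> (bool \<Rightarrow> bool \<Rightarrow> qop) \<Rightarrow> (bool \<Rightarrow> bool \<Rightarrow> qop) \<Rightarrow> real" where
  "R3Q \<rho> G12 G23 G13 = (anticorr \<rho> G12 + anticorr \<rho> G23 + anticorr \<rho> G13) / 3"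

end

theory Submission imports Defs begin

lemma qtrace_add: "qtrace (A + B) = qtrace A + qtrace B"
  by (simp add: qtrace_def sum.distrib)
lemma qtrace_diff: "qtrace (A - B) = qtrace A - qtrace B"
  by (simp add: qtrace_def sum_subtractf)

lemma tr_quad:
  "qtrace ((\<chi> i j. v$i * cnj (v$j)) ** A) = (\<Sum>i\<in>UNIV. \<Sum>j\<in>UNIV. cnj (v$i) * A$i$j * v$j)"
  by (simp add: qtrace_def matrix_matrix_mult_def sum_2 algebra_simps)

lemma tr_psd:
  assumes "psd A" shows "Re (qtrace ((\<chi> i j. v$i * cnj (v$j)) ** A)) \<ge> 0"
  using assms unfolding psd_def tr_quad Let_def by blast

lemma pair_minus:
  assumes "joint_meas E F G"
  shows "G True False + G False True = E False + F False - G False False - G False False"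
proof -
  from assms have "G False False + G False True = E False" "G False False + G True False = F False"
    unfolding joint_meas_def by (auto simp: UNIV_bool)
  note h = this
  show ?thesis unfolding h[symmetric] by (simp add: algebra_simps)
qed

lemma pair_plus:
  assumes "joint_meas E F G"
  shows "G True False + G False True = E True + F True - G True True - G True True"
proof -
  from assms have "G True False + G True True = E True" "G False True + G True True = F True"
    unfolding joint_meas_def by (auto simp: UNIV_bool)
  note h = this
  show ?thesis unfolding h[symmetric] by (simp add: algebra_simps)
qed

definition rho :: "complex^2 \<Rightarrow> qop" where
  "rho v = (\<chi> i j. v$i * cnj (v$j))"

lemma rho_density:
  assumes "cnj (v$1) * v$1 + cnj (v$2) * v$2 = 1"
  shows "density (rho v)"
proof -
  have "psd (rho v)"
    unfolding psd_def Let_def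
  proof
    fix w :: "complex^2"
    define s where "s = cnj (w$1) * v$1 + cnj (w$2) * v$2"
    have "(\<Sum>i\<in>UNIV. \<Sum>j\<in>UNIV. cnj (w$i) * rho v$i$j * w$j) = s * cnj s"
      unfolding rho_def s_def by (simp add: sum_2 algebra_simps)
    also have "\<dots> = complex_of_real (Re s ^ 2 + Im s ^ 2)" by (rule complex_mult_cnj)
    finally show "Im (\<Sum>i\<in>UNIV. \<Sum>j\<in>UNIV. cnj (w$i) * rho v$i$j * w$j) = 0 \<and>
       0 \<le> Re (\<Sum>i\<in>UNIV. \<Sum>j\<in>UNIV. cnj (w$i) * rho v$i$j * w$j)" by simp
  qed
  moreover have "qtrace (rho v) = 1" using assms unfolding qtrace_def rho_def
    by (simp add: sum_2 mult.commute)
  ultimately show ?thesis unfolding density_def by simp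
qed

lemma tr_effect:
  fixes R :: qop and a b c :: real
  assumes "R$1$1 = (1+c)/2" "R$1$2 = (a - \<i>*b)/2" "R$2$1 = (a + \<i>*b)/2" "R$2$2 = (1-c)/2"
  shows "Re (qtrace (R ** effect \<eta> m x)) = 1/2 + (if x then 1 else -1)*\<eta>/2*(m$1*a+m$2*b+m$3*c)"
  apply (simp add: qtrace_def matrix_matrix_mult_def sum_2 effect_def smat_def pauli_dot_def
      sigma_x_def sigma_y_def sigma_z_def mat_def assms)
  apply (cases x; simp add: field_simps; argo?)
  done

lemma tr_lin: fixes R A B C :: qop shows "Re (qtrace (R ** (A + B - C - C))) =
   Re (qtrace (R ** A)) + Re (qtrace (R ** B)) - 2 * Re (qtrace (R ** C))"
proof -
  have d: "R ** (X - Y) = R ** X - R ** Y" for X Y :: qop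
    by (simp add: matrix_matrix_mult_def vec_eq_iff sum_subtractf algebra_simps)
  have "R ** (A + B - C - C) = R ** A + R ** B - R ** C - R ** C"
    by (simp only: d matrix_add_ldistrib)
  hence "qtrace (R ** (A + B - C - C)) = qtrace (R ** A) + qtrace (R ** B) - qtrace (R ** C) - qtrace (R ** C)"
    by (simp only: qtrace_add qtrace_diff)
  thus ?thesis by simp
qed

lemma anti_minus:
  assumes "joint_meas E F G"
  shows "anticorr (rho v) G \<le> Re (qtrace (rho v ** E False)) + Re (qtrace (rho v ** F False))"
proof -
  have "psd (G False False)" using assms unfolding joint_meas_def by blast
  hence "Re (qtrace (rho v ** G False False)) \<ge> 0" unfolding rho_def by (rule tr_psd)
  thus ?thesis unfolding anticorr_def pair_minus[OF assms] tr_lin by simp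
qed

lemma anti_plus:
  assumes "joint_meas E F G"
  shows "anticorr (rho v) G \<le> Re (qtrace (rho v ** E True)) + Re (qtrace (rho v ** F True))"
proof -
  have "psd (G True True)" using assms unfolding joint_meas_def by blast
  hence "Re (qtrace (rho v ** G True True)) \<ge> 0" unfolding rho_def by (rule tr_psd)
  thus ?thesis unfolding anticorr_def pair_plus[OF assms] tr_lin by simp
qed

lemma good_state:
  fixes a b c :: real
  assumes "a^2 + b^2 + c^2 = 1"
  shows "\<exists>v. cnj (v$1) * v$1 + cnj (v$2) * v$2 = 1 \<and>
     rho v$1$1 = (1+c)/2 \<and> rho v$1$2 = (a - \<i>*b)/2 \<and> rho v$2$1 = (a + \<i>*b)/2 \<and> rho v$2$2 = (1-c)/2"
proof (cases "c = -1")
  case True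
  hence "a^2 + b^2 = 0" using assms by simp
  hence ab: "a = 0" "b = 0" by (simp_all add: sum_power2_eq_zero_iff)
  define v :: "complex^2" where "v = (\<chi> i. if i = 1 then 0 else 1)"
  show ?thesis
    by (rule exI[of _ v]) (simp add: v_def rho_def ab True)
next
  case False
  have c2: "c^2 \<le> 1" using assms by (smt (verit) zero_le_power2)
  have "c \<ge> -1"
  proof (rule ccontr)
    assume "\<not> c \<ge> -1"
    hence "(c+1)*(c-1) > 0" by (intro mult_neg_neg) auto
    thus False using c2 by (simp add: power2_eq_square algebra_simps)
  qed
  hence cp: "1 + c > 0" using False by simp
  define r where "r = sqrt (2*(1+c))"
  have rp: "r > 0" using cp unfolding r_def by simp
  have r2: "r * r = 2*(1+c)" unfolding r_def using cp by simp
  define v :: "complex^2" where "v = (\<chi> i. if i = 1 then complex_of_real ((1+c)/r) else Complex (a/r) (b/r))"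
  have x1: "((1+c)/r)*((1+c)/r) = (1+c)/2" using r2 cp rp by (simp add: field_simps)
  have e1: "cnj (v$1) * v$1 = complex_of_real ((1+c)/2)"
    unfolding x1[symmetric] by (simp add: v_def)
  have e2: "cnj (v$2) * v$2 = complex_of_real ((1-c)/2)"
  proof -
    have "a*a + b*b = (1-c)*(1+c)" using assms by (simp add: power2_eq_square algebra_simps)
    have "(a/r)*(a/r) + (b/r)*(b/r) = (a*a+b*b)/(r*r)" using rp by (simp add: field_simps)
    also have "\<dots> = ((1-c)*(1+c))/((1+c)*2)" using \<open>a*a + b*b = (1-c)*(1+c)\<close> r2 by (simp add: algebra_simps)
    also have "\<dots> = (1-c)/2" using cp by (simp add: field_simps)
    finally have "(a/r)*(a/r) + (b/r)*(b/r) = (1-c)/2" .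
    thus ?thesis by (simp add: v_def complex_eq_iff power2_eq_square)
  qed
  have e3: "v$1 * cnj (v$2) = (a - \<i>*b)/2"
    using rp r2 cp by (simp add: v_def complex_eq_iff field_simps)
  have e4: "v$2 * cnj (v$1) = (a + \<i>*b)/2"
    using rp r2 cp by (simp add: v_def complex_eq_iff field_simps)
  have R: "rho v$1$1 = cnj (v$1) * v$1" "rho v$2$2 = cnj (v$2) * v$2"
    "rho v$1$2 = v$1 * cnj (v$2)" "rho v$2$1 = v$2 * cnj (v$1)"
    by (simp_all add: rho_def mult.commute)
  have N: "cnj (v$1) * v$1 + cnj (v$2) * v$2 = 1"
  proof -
    have "(1+c)/2 + (1-c)/2 = (1::real)" by (simp add: field_simps)
    hence "complex_of_real ((1+c)/2 + (1-c)/2) = 1" by simp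
    thus ?thesis unfolding e1 e2 of_real_add[symmetric] .
  qed
  show ?thesis
    apply (rule exI[of _ v])
    apply (intro conjI)
     apply (rule N)
    by (simp_all only: R e1 e2 e3 e4 of_real_divide of_real_add
      of_real_diff of_real_1 of_real_numeral)
qed

theorem mainTheorem1:
  fixes \<eta> :: real and n1 n2 n3 :: "real^3"
  assumes "0 \<le> \<eta>" and "\<eta> \<le> 1"
    and "norm n1 = 1" and "norm n2 = 1" and "norm n3 = 1"
    and "\<exists>G12 G23 G13. joint_meas (effect \<eta> n1) (effect \<eta> n2) G12
                      \<and> joint_meas (effect \<eta> n2) (effect \<eta> n3) G23
                      \<and> joint_meas (effect \<eta> n1) (effect \<eta> n3) G13"
  shows "\<not> (\<exists>G12 G23 G13. joint_meas (effect \<eta> n1) (effect \<eta> n2) G12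
                      \<and> joint_meas (effect \<eta> n2) (effect \<eta> n3) G23
                      \<and> joint_meas (effect \<eta> n1) (effect \<eta> n3) G13
                      \<and> (\<forall>\<rho>. density \<rho> \<longrightarrow> R3Q \<rho> G12 G23 G13 > 1 - \<eta> / 3))"
proof
  assume "\<exists>G12 G23 G13. joint_meas (effect \<eta> n1) (effect \<eta> n2) G12
                      \<and> joint_meas (effect \<eta> n2) (effect \<eta> n3) G23
                      \<and> joint_meas (effect \<eta> n1) (effect \<eta> n3) G13
                      \<and> (\<forall>\<rho>. density \<rho> \<longrightarrow> R3Q \<rho> G12 G23 G13 > 1 - \<eta> / 3)"
  then obtain G12 G23 G13 where j12: "joint_meas (effect \<eta> n1) (effect \<eta> n2) G12"
    and j23: "joint_meas (effect \<eta> n2) (effect \<eta> n3) G23"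
    and j13: "joint_meas (effect \<eta> n1) (effect \<eta> n3) G13"
    and all: "\<forall>\<rho>. density \<rho> \<longrightarrow> R3Q \<rho> G12 G23 G13 > 1 - \<eta> / 3" by blast
  have "n2 \<bullet> n2 = 1" using assms(4) by (simp add: norm_eq_1)
  hence unit: "(n2$1)^2 + (n2$2)^2 + (n2$3)^2 = 1"
    by (simp add: inner_vec_def sum_3 power2_eq_square)
  obtain v where nv: "cnj (v$1) * v$1 + cnj (v$2) * v$2 = 1"
    and r: "rho v$1$1 = (1+n2$3)/2" "rho v$1$2 = (n2$1 - \<i>*n2$2)/2"
           "rho v$2$1 = (n2$1 + \<i>*n2$2)/2" "rho v$2$2 = (1-n2$3)/2"
    using good_state[OF unit] by blast
  have "R3Q (rho v) G12 G23 G13 > 1 - \<eta> / 3" using all rho_density[OF nv] by blast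
  moreover
  have T: "Re (qtrace (rho v ** effect \<eta> m x)) =
      1/2 + (if x then 1 else -1)*\<eta>/2*(m$1*n2$1+m$2*n2$2+m$3*n2$3)" for m x
    by (rule tr_effect[OF r])
  have "anticorr (rho v) G12 \<le> Re (qtrace (rho v ** effect \<eta> n1 False)) + Re (qtrace (rho v ** effect \<eta> n2 False))"
    by (rule anti_minus[OF j12])
  moreover have "anticorr (rho v) G23 \<le> Re (qtrace (rho v ** effect \<eta> n2 False)) + Re (qtrace (rho v ** effect \<eta> n3 False))"
    by (rule anti_minus[OF j23])
  moreover have "anticorr (rho v) G13 \<le> Re (qtrace (rho v ** effect \<eta> n1 True)) + Re (qtrace (rho v ** effect \<eta> n3 True))"
    by (rule anti_plus[OF j13])
  moreover have u: "\<eta>*(n2$1*n2$1) + \<eta>*(n2$2*n2$2) + \<eta>*(n2$3*n2$3) = \<eta>"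
  proof -
    have "\<eta> * ((n2$1)^2 + (n2$2)^2 + (n2$3)^2) = \<eta>" using unit by simp
    thus ?thesis by (simp add: power2_eq_square algebra_simps)
  qed
  ultimately show False unfolding R3Q_def T
    by (simp add: algebra_simps)
qed

end
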